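(* Let $n,d,m$ be positive integers with $d$ odd and $\delta=n/d$ a positive integer, and let $X\in\mathbb{R}^{m\times n}$ be any matrix whose $k$-th row is the data vector $\mathbf{x}^{(0,k)}$, $k=1,\dots,m$. Consider the 1-hidden layer treelike committee machine sign perceptron network $A([n,d,1];\mathrm{sign})$, and the data set $(\mathbf{x}^{(0,k)},1)_{k=1}^m$ (all labels equal to $1$). For $j=1,\dots,d$ let $\mathcal{S}^{(j)}=\{(j-1)\delta+1,\dots,j\delta\}$ and $X^{(j)}=X_{:,\mathcal{S}^{(j)}}\in\mathbb{R}^{m\times\delta}$. Define $$f_{rp}(X)=\frac{1}{\sqrt n}\min_{\mathbf{z}^{(j)}\in\mathbb{R}^\delta,\ \|\mathbf{z}^{(j)}\|_2=1\ (1\le j\le d),\ Q\in\mathbb{R}^{m\times d}}\ \max_{\Lambda\in\mathbb{R}^{m\times d}}\Big(\|\mathbf{1}-\mathrm{sign}(\mathrm{sign}(Q)\mathbf{1})\|_2+\sum_{j=1}^d(\Lambda_{:,j})^TX^{(j)}\mathbf{z}^{(j)}-\mathrm{tr}(\Lambda^TQ)\Big).$$ If $f_{rp}(X)>0$, then the data set $(\mathbf{x}^{(0,k)},1)_{k=1}^m$ cannot be properly memorized by the network.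
   Context: The network $A([n,d,1];\mathrm{sign})$ (treelike committee machine, TCM): an input $\mathbf{x}\in\mathbb{R}^n$ is mapped to the output $\mathrm{sign}(\mathbf{1}^T\mathrm{sign}(W\mathbf{x}))$, where $\mathbf{1}$ is the all-ones vector, $\mathrm{sign}$ acts componentwise, and $W\in\mathbb{R}^{d\times n}$ is a weight matrix with treelike sparsity: the nonzero entries of row $j$ of $W$ lie only in the columns $\mathcal{S}^{(j)}=\{(j-1)\delta+1,\dots,j\delta\}$. The data set $(\mathbf{x}^{(0,k)},y^{(0,k)})_{k=1}^m$ is properly memorized if there exists such a $W$ with $\mathrm{sign}(\mathbf{1}^T\mathrm{sign}(W\mathbf{x}^{(0,k)}))=y^{(0,k)}$ for all $k$. For a matrix $Q$, $\mathrm{sign}(Q)$ is applied entrywise and $\mathrm{sign}(Q)\mathbf{1}$ is the vector of row sums of $\mathrm{sign}(Q)$; $\Lambda_{:,j}$ denotes the $j$-th column of $\Lambda$. *)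

theory Defs
  imports Complex_Main "HOL-Library.Extended_Real"
begin

text \<open>Sign function with values in {-1,1}; convention sign(0) = -1.\<close>
definition sgnpm :: "real \<Rightarrow> real" where
  "sgnpm x = (if x > 0 then 1 else -1)"

text \<open>Indices are 0-based: rows k < m, columns i < n, hidden units j < d.
  Block j of the treelike architecture is the column set {j*delta ..< (j+1)*delta}.\<close>
definition tree_block :: "nat \<Rightarrow> nat \<Rightarrow> nat set" where
  "tree_block delta j = {j * delta ..< (j + 1) * delta}"

definition tcm_out :: "nat \<Rightarrow> nat \<Rightarrow> (nat \<Rightarrow> nat \<Rightarrow> real) \<Rightarrow> (nat \<Rightarrow> real) \<Rightarrow> real" where
  "tcm_out n d W x = sgnpm (\<Sum>j<d. sgnpm (\<Sum>i<n. W j i * x i))"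

definition properly_memorized ::
  "nat \<Rightarrow> nat \<Rightarrow> nat \<Rightarrow> nat \<Rightarrow> (nat \<Rightarrow> nat \<Rightarrow> real) \<Rightarrow> (nat \<Rightarrow> real) \<Rightarrow> bool" where
  "properly_memorized n d delta m X y \<longleftrightarrow>
     (\<exists>W :: nat \<Rightarrow> nat \<Rightarrow> real.
        (\<forall>j<d. \<forall>i<n. i \<notin> tree_block delta j \<longrightarrow> W j i = 0) \<and>
        (\<forall>k<m. tcm_out n d W (X k) = y k))"

text \<open>The objective inside min-max: z j i (j<d, i<delta) are the blocks z^(j),
  Q k j and Lam k j are m x d matrices, X k i is the data matrix (row k = x^(0,k)).\<close>
definition frp_obj ::
  "nat \<Rightarrow> nat \<Rightarrow> nat \<Rightarrow> (nat \<Rightarrow> nat \<Rightarrow> real) \<Rightarrow> (nat \<Rightarrow> nat \<Rightarrow> real)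
     \<Rightarrow> (nat \<Rightarrow> nat \<Rightarrow> real) \<Rightarrow> (nat \<Rightarrow> nat \<Rightarrow> real) \<Rightarrow> real" where
  "frp_obj d delta m X z Q Lam =
     sqrt (\<Sum>k<m. (1 - sgnpm (\<Sum>j<d. sgnpm (Q k j)))\<^sup>2)
     + (\<Sum>j<d. \<Sum>k<m. Lam k j * (\<Sum>i<delta. X k (j * delta + i) * z j i))
     - (\<Sum>k<m. \<Sum>j<d. Lam k j * Q k j)"

text \<open>f_rp(X), valued in the extended reals since the inner max may be +infinity;
  min / max are rendered as Inf / Sup.\<close>
definition f_rp :: "nat \<Rightarrow> nat \<Rightarrow> nat \<Rightarrow> nat \<Rightarrow> (nat \<Rightarrow> nat \<Rightarrow> real) \<Rightarrow> ereal" where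
  "f_rp n d delta m X =
     ereal (1 / sqrt (real n)) *
     (INF (z, Q) \<in> {(z, Q). \<forall>j<d. (\<Sum>i<delta. (z j i)\<^sup>2) = 1}.
        SUP Lam \<in> (UNIV :: (nat \<Rightarrow> nat \<Rightarrow> real) set). ereal (frp_obj d delta m X z Q Lam))"

end

theory Submission
  imports Defs
begin

lemma ereal_mult_nonpos: "a \<ge> 0 \<Longrightarrow> (b::ereal) \<le> 0 \<Longrightarrow> ereal a * b \<le> 0"
  by (cases b) (auto simp: mult_nonneg_nonpos)

lemma sgnpm_ge: "sgnpm x \<ge> -1" by (simp add: sgnpm_def)

lemma sgnpm_scale: "c > 0 \<Longrightarrow> sgnpm (c * x) = sgnpm x"
  by (simp add: sgnpm_def zero_less_mult_iff)

lemma block_sum: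
  fixes f :: "nat \<Rightarrow> real"
  assumes "j < d" "n = d * delta" "\<forall>i<n. i \<notin> tree_block delta j \<longrightarrow> f i = 0"
  shows "(\<Sum>i<n. f i) = (\<Sum>i<delta. f (j * delta + i))"
proof -
  have sub: "{j*delta..<(j+1)*delta} \<subseteq> {..<n}"
  proof -
    have "(j+1)*delta \<le> d*delta" using assms(1) by (intro mult_right_mono) auto
    then show ?thesis using assms(2) by auto
  qed
  have "(\<Sum>i<n. f i) = (\<Sum>i\<in>{j*delta..<(j+1)*delta}. f i)"
    by (rule sum.mono_neutral_right) (use sub assms(3) in \<open>auto simp: tree_block_def\<close>)
  also have "\<dots> = (\<Sum>i<delta. f (j * delta + i))"
  proof -
    have "{j*delta..<(j+1)*delta} = (\<lambda>i. j*delta + i) ` {..<delta}"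
    proof (rule set_eqI, rule iffI)
      fix x assume "x \<in> {j*delta..<(j+1)*delta}"
      then show "x \<in> (\<lambda>i. j*delta + i) ` {..<delta}"
        by (intro image_eqI[of _ _ "x - j*delta"]) auto
    qed auto
    then show ?thesis by (simp add: sum.reindex inj_on_def)
  qed
  finally show ?thesis .
qed

theorem lemma1:
  fixes n d m delta :: nat and X :: "nat \<Rightarrow> nat \<Rightarrow> real"
  assumes "n > 0" "d > 0" "m > 0" "odd d" "delta > 0" "n = d * delta"
    and "f_rp n d delta m X > 0"
  shows "\<not> properly_memorized n d delta m X (\<lambda>k. 1)"
proof
  assume "properly_memorized n d delta m X (\<lambda>k. 1)"
  then obtain W where Wz: "\<forall>j<d. \<forall>i<n. i \<notin> tree_block delta j \<longrightarrow> W j i = 0"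
    and Wo: "\<forall>k<m. tcm_out n d W (X k) = 1"
    unfolding properly_memorized_def by blast
  define w where "w j i = W j (j*delta + i)" for j i
  define N where "N j = sqrt (\<Sum>i<delta. (w j i)\<^sup>2)" for j
  define z where "z j i = (if N j > 0 then w j i / N j else (if i = 0 then 1 else 0))" for j i
  define Q where "Q k j = (\<Sum>i<delta. X k (j * delta + i) * z j i)" for k j
  have hs: "(\<Sum>i<n. W j i * X k i) = (\<Sum>i<delta. X k (j*delta+i) * w j i)" if "j < d" for j k
    using block_sum[of j d n delta "\<lambda>i. W j i * X k i"] Wz that assms(6)
    by (simp add: w_def mult.commute)
  have znorm: "\<forall>j<d. (\<Sum>i<delta. (z j i)\<^sup>2) = 1"
  proof (intro allI impI)
    fix j assume "j < d"
    show "(\<Sum>i<delta. (z j i)\<^sup>2) = 1"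
    proof (cases "N j > 0")
      case True
      have "(\<Sum>i<delta. (z j i)\<^sup>2) = (\<Sum>i<delta. (w j i)\<^sup>2) / (N j)\<^sup>2"
        using True by (simp add: z_def power_divide sum_divide_distrib)
      also have "(N j)\<^sup>2 = (\<Sum>i<delta. (w j i)\<^sup>2)"
        unfolding N_def by (simp add: sum_nonneg)
      finally show ?thesis using True by (simp add: N_def)
    next
      case False
      then have "(\<Sum>i<delta. (z j i)\<^sup>2) = (\<Sum>i<delta. if i = 0 then 1 else 0)"
        by (intro sum.cong) (auto simp: z_def)
      also have "\<dots> = 1" using assms(5) by (simp add: sum.delta)
      finally show ?thesis .
    qed
  qed
  have qge: "sgnpm (Q k j) \<ge> sgnpm (\<Sum>i<n. W j i * X k i)" if "j < d" for j k
  proof (cases "N j > 0")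
    case True
    have "Q k j = (1 / N j) * (\<Sum>i<delta. X k (j*delta+i) * w j i)"
      unfolding Q_def z_def using True by (simp add: sum_distrib_left)
    then show ?thesis using hs[OF that] True by (simp add: sgnpm_def zero_less_divide_iff)
  next
    case False
    have "sgnpm (\<Sum>i<n. W j i * X k i) \<le> -1 \<or> sgnpm (\<Sum>i<n. W j i * X k i) = 1"
      by (simp add: sgnpm_def)
    moreover have "(\<Sum>i<delta. (w j i)\<^sup>2) = 0"
      using False unfolding N_def by (smt (verit) real_sqrt_gt_0_iff sum_nonneg zero_le_power2)
    then have "\<forall>i<delta. w j i = 0"
      by (subst (asm) sum_nonneg_eq_0_iff) auto
    then have "(\<Sum>i<n. W j i * X k i) = 0" using hs[OF that] by simp
    ultimately show ?thesis using sgnpm_ge by (simp add: sgnpm_def)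
  qed
  have first: "(1 - sgnpm (\<Sum>j<d. sgnpm (Q k j))) = 0" if "k < m" for k
  proof -
    have "sgnpm (\<Sum>j<d. sgnpm (\<Sum>i<n. W j i * X k i)) = 1"
      using Wo that by (simp add: tcm_out_def)
    then have "(\<Sum>j<d. sgnpm (\<Sum>i<n. W j i * X k i)) > 0"
      by (simp add: sgnpm_def split: if_splits)
    moreover have "(\<Sum>j<d. sgnpm (\<Sum>i<n. W j i * X k i)) \<le> (\<Sum>j<d. sgnpm (Q k j))"
      by (rule sum_mono) (simp add: qge)
    ultimately show ?thesis by (simp add: sgnpm_def)
  qed
  have obj0: "frp_obj d delta m X z Q Lam = 0" for Lam
  proof -
    have "(\<Sum>j<d. \<Sum>k<m. Lam k j * (\<Sum>i<delta. X k (j * delta + i) * z j i))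
        = (\<Sum>k<m. \<Sum>j<d. Lam k j * Q k j)"
      unfolding Q_def by (rule sum.swap)
    moreover have "(\<Sum>k<m. (1 - sgnpm (\<Sum>j<d. sgnpm (Q k j)))\<^sup>2) = 0"
      using first by simp
    ultimately show ?thesis unfolding frp_obj_def by simp
  qed
  have "(INF (z, Q) \<in> {(z, Q). \<forall>j<d. (\<Sum>i<delta. (z j i)\<^sup>2) = 1}.
        SUP Lam \<in> (UNIV :: (nat \<Rightarrow> nat \<Rightarrow> real) set). ereal (frp_obj d delta m X z Q Lam)) \<le> 0"
  proof -
    have "(z, Q) \<in> {(z, Q). \<forall>j<d. (\<Sum>i<delta. (z j i)\<^sup>2) = 1}" using znorm by simp
    then have "(INF (z, Q) \<in> {(z, Q). \<forall>j<d. (\<Sum>i<delta. (z j i)\<^sup>2) = 1}.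
        SUP Lam \<in> (UNIV :: (nat \<Rightarrow> nat \<Rightarrow> real) set). ereal (frp_obj d delta m X z Q Lam))
        \<le> (SUP Lam \<in> (UNIV :: (nat \<Rightarrow> nat \<Rightarrow> real) set). ereal (frp_obj d delta m X z Q Lam))"
      by (rule INF_lower2) simp
    also have "\<dots> = 0" using obj0 by simp
    finally show ?thesis .
  qed
  moreover have "ereal (1 / sqrt (real n)) \<ge> 0" by simp
  ultimately have "f_rp n d delta m X \<le> 0"
    unfolding f_rp_def by (intro ereal_mult_nonpos) simp_all
  then show False using assms(7) by simp
qed

end
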